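(* Let $(X,d)$ be a separable metric space admitting a weak convergence, and let $p\ge 1$. For any $\mu\in\mathcal{P}_{p-1}(X)$, the set $M_p(\mu)$ is non-empty and $d$-compact.
   Context: A convergence $c$ on a set $X$ is a rule assigning at most one point of $X$ as the "limit" of each sequence in $X$, such that whenever a sequence has limit $x$, every subsequence also has limit $x$. A convergence $w$ on $X$ is a weak convergence for $(X,d)$ if: (W1) whenever $\sup_n d(x_n,y)<\infty$ for some $y$, some subsequence converges in $w$ to some point of $X$; (W2) whenever $x_n\to x$ in $w$, $d(x,y)\le\liminf_n d(x_n,y)$ for all $y\in X$; (W3) whenever $x_n\to x$ in $w$ and $d(x_n,y)\to d(x,y)$ for some $y\in X$, then $d(x_n,x)\to0$. $(X,d)$ admits a weak convergence if such a $w$ exists. $\mathcal{P}_{p-1}(X)$ is the set of Borel probability measures $\mu$ on $(X,d)$ with $\int_X d^{p-1}(x,y)\,d\mu(y)<\infty$ for some (equivalently all) $x\in X$. For such $\mu$, $W_p(\mu,x,x'):=\int_X (d^p(x,y)-d^p(x',y))\,d\mu(y)$ and $M_p(\mu):=\{x\in X: W_p(\mu,x,x')\le 0 \text{ for all } x'\in X\}$. *)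

theory Defs
  imports "HOL-Probability.Probability"
begin

text \<open>The metric space (X,d) is the type 'a of class metric_space with d = dist.\<close>

text \<open>Real power with the convention t^0 = 1 (also for t = 0), for t >= 0.\<close>
definition rpow :: "real \<Rightarrow> real \<Rightarrow> real" where
  "rpow t q = (if q = 0 then 1 else t powr q)"

definition separable_metric :: "'a::metric_space itself \<Rightarrow> bool" where
  "separable_metric _ \<longleftrightarrow> (\<exists>D::'a set. countable D \<and> closure D = UNIV)"

definition is_convergence :: "((nat \<Rightarrow> 'a) \<Rightarrow> 'a \<Rightarrow> bool) \<Rightarrow> bool" where
  "is_convergence c \<longleftrightarrow>
     (\<forall>s x y. c s x \<and> c s y \<longrightarrow> x = y) \<and>
     (\<forall>s x (r::nat \<Rightarrow> nat). c s x \<and> strict_mono r \<longrightarrow> c (s \<circ> r) x)"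

definition is_weak_convergence :: "((nat \<Rightarrow> 'a::metric_space) \<Rightarrow> 'a \<Rightarrow> bool) \<Rightarrow> bool" where
  "is_weak_convergence w \<longleftrightarrow> is_convergence w \<and>
     (\<forall>s y. bdd_above (range (\<lambda>n. dist (s n) y)) \<longrightarrow>
            (\<exists>(r::nat \<Rightarrow> nat) x. strict_mono r \<and> w (s \<circ> r) x)) \<and>
     (\<forall>s x. w s x \<longrightarrow> (\<forall>y. ereal (dist x y) \<le> liminf (\<lambda>n. ereal (dist (s n) y)))) \<and>
     (\<forall>s x y. w s x \<and> (\<lambda>n. dist (s n) y) \<longlonglongrightarrow> dist x y \<longrightarrow>
            (\<lambda>n. dist (s n) x) \<longlonglongrightarrow> 0)"

definition admits_weak_convergence :: "'a::metric_space itself \<Rightarrow> bool" where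
  "admits_weak_convergence _ \<longleftrightarrow> (\<exists>w::(nat \<Rightarrow> 'a) \<Rightarrow> 'a \<Rightarrow> bool. is_weak_convergence w)"

definition P_moment :: "real \<Rightarrow> 'a::metric_space measure set" where
  "P_moment q = {\<mu>. prob_space \<mu> \<and> sets \<mu> = sets borel \<and>
      (\<exists>x. (\<integral>\<^sup>+ y. ennreal (rpow (dist x y) q) \<partial>\<mu>) < \<infinity>)}"

definition Wp :: "real \<Rightarrow> 'a::metric_space measure \<Rightarrow> 'a \<Rightarrow> 'a \<Rightarrow> real" where
  "Wp p \<mu> x x' = (\<integral> y. (rpow (dist x y) p - rpow (dist x' y) p) \<partial>\<mu>)"

definition Mp :: "real \<Rightarrow> 'a::metric_space measure \<Rightarrow> 'a set" where
  "Mp p \<mu> = {x. \<forall>x'. Wp p \<mu> x x' \<le> 0}"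

end

theory Submission
  imports Defs
begin
lemma rpow_nonneg: "0 \<le> rpow t q"
  by (simp add: rpow_def)

lemma rpow_mono: "0 \<le> q \<Longrightarrow> 0 \<le> a \<Longrightarrow> a \<le> b \<Longrightarrow> rpow a q \<le> rpow b q"
  by (simp add: rpow_def powr_mono2)

lemma rpow_mult: "0 \<le> a \<Longrightarrow> 0 \<le> b \<Longrightarrow> rpow (a*b) q = rpow a q * rpow b q"
  by (simp add: rpow_def powr_mult)

lemma rpow_pos_eq: "q \<noteq> 0 \<Longrightarrow> rpow t q = t powr q"
  by (simp add: rpow_def)

lemma rpow_strict: "0 < q \<Longrightarrow> 0 \<le> a \<Longrightarrow> a < b \<Longrightarrow> rpow a q < rpow b q"
  by (simp add: rpow_def powr_less_mono2)

lemma rpow_ge1: "0 \<le> q \<Longrightarrow> 1 \<le> a \<Longrightarrow> 1 \<le> rpow a q"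
  by (simp add: rpow_def ge_one_powr_ge_zero)

lemma meas_rpow: "f \<in> borel_measurable M \<Longrightarrow> (\<lambda>y. rpow (f y) q) \<in> borel_measurable M"
  unfolding rpow_def by (cases "q = 0") (simp_all add: powr_real_measurable)

lemma mvt_pow:
  assumes p: "p \<ge> 1" and a: "0 \<le> a" and b: "0 \<le> b"
  shows "rpow b p - rpow a p \<le> p * max 0 (b - a) * rpow b (p - 1)"
proof (cases "b \<le> a")
  case True
  then have "rpow b p \<le> rpow a p" using p b by (intro rpow_mono) auto
  moreover have "max 0 (b - a) = 0" using True by simp
  ultimately show ?thesis by simp
next
  case False
  then have ab: "a < b" by simp
  have cont: "continuous_on {a..b} (\<lambda>t. t powr p)"
  proof (rule continuous_on_powr')
    show "continuous_on {a..b} (\<lambda>t. t)" by (rule continuous_on_id)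
    show "continuous_on {a..b} (\<lambda>t. p)" by (rule continuous_on_const)
    show "\<forall>x\<in>{a..b}. 0 \<le> x \<and> (x = 0 \<longrightarrow> 0 < p)" using a p by auto
  qed
  have "(\<lambda>t. t powr p) differentiable at x" if "a < x" "x < b" for x
  proof -
    have "x > 0" using a that by simp
    then show ?thesis using has_real_derivative_powr[of x p] unfolding real_differentiable_def by blast
  qed
  from MVT[OF ab cont this] obtain l z where z: "a < z" "z < b"
    and d: "((\<lambda>t. t powr p) has_real_derivative l) (at z)" and eq: "b powr p - a powr p = (b - a) * l"
    by blast
  have "l = p * z powr (p - 1)"
    using DERIV_unique[OF d has_real_derivative_powr[of z p]] z a by simp
  also have "\<dots> \<le> p * b powr (p - 1)"
    using z a p by (intro mult_left_mono powr_mono2) auto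
  finally have "b powr p - a powr p \<le> (b - a) * (p * b powr (p - 1))"
    unfolding eq using ab by (intro mult_left_mono) auto
  moreover have "rpow b (p - 1) = b powr (p - 1)" using ab a by (simp add: rpow_def)
  ultimately show ?thesis using p ab by (simp add: rpow_def mult_ac)
qed

lemma fatou_real:
  fixes f :: "nat \<Rightarrow> 'a \<Rightarrow> real"
  assumes "\<And>n. integrable M (f n)" "integrable M g" "\<And>n y. y \<in> space M \<Longrightarrow> 0 \<le> f n y + g y"
  shows "(\<integral>\<^sup>+ y. liminf (\<lambda>n. ennreal (f n y + g y)) \<partial>M) \<le> liminf (\<lambda>n. ennreal (integral\<^sup>L M (f n) + integral\<^sup>L M g))"
proof -
  have "(\<integral>\<^sup>+ y. liminf (\<lambda>n. ennreal (f n y + g y)) \<partial>M) \<le> liminf (\<lambda>n. \<integral>\<^sup>+ y. ennreal (f n y + g y) \<partial>M)"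
    using assms by (intro nn_integral_liminf) (auto intro!: borel_measurable_integrable)
  also have "(\<lambda>n. \<integral>\<^sup>+ y. ennreal (f n y + g y) \<partial>M) = (\<lambda>n. ennreal (integral\<^sup>L M (f n) + integral\<^sup>L M g))"
  proof
    fix n
    have "(\<integral>\<^sup>+ y. ennreal (f n y + g y) \<partial>M) = ennreal (\<integral>y. f n y + g y \<partial>M)"
      using assms by (intro nn_integral_eq_integral) auto
    also have "(\<integral>y. f n y + g y \<partial>M) = integral\<^sup>L M (f n) + integral\<^sup>L M g"
      by (rule Bochner_Integration.integral_add[OF assms(1) assms(2)])
    finally show "(\<integral>\<^sup>+ y. ennreal (f n y + g y) \<partial>M) = ennreal (integral\<^sup>L M (f n) + integral\<^sup>L M g)" .
  qed
  finally show ?thesis .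
qed

locale wcsetup = prob_space M for M :: "'a::metric_space measure" +
  fixes p :: real and w :: "(nat \<Rightarrow> 'a) \<Rightarrow> 'a \<Rightarrow> bool" and x0 :: 'a
  assumes p1: "1 \<le> p" and sets_eq: "sets M = sets borel"
    and wc: "is_weak_convergence w"
    and mom: "(\<integral>\<^sup>+ y. ennreal (rpow (dist x0 y) (p - 1)) \<partial>M) < \<infinity>"
begin

lemma space_eq: "space M = UNIV"
  using sets_eq_imp_space_eq[OF sets_eq] by simp

lemma meas_dist: "(\<lambda>y. dist a y) \<in> borel_measurable M"
proof -
  have "(\<lambda>y. dist a y) \<in> borel_measurable borel"
    by (intro borel_measurable_continuous_onI continuous_on_dist continuous_on_const continuous_on_id)
  moreover have eq: "(borel_measurable M :: ('a \<Rightarrow> real) set) = borel_measurable borel" by (rule measurable_cong_sets[OF sets_eq refl])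
  ultimately show ?thesis by simp
qed

lemma meas_phi: "(\<lambda>y. rpow (dist a y + c) q) \<in> borel_measurable M"
  by (intro meas_rpow borel_measurable_add meas_dist borel_measurable_const)

lemma meas_phi0: "(\<lambda>y. rpow (dist a y) q) \<in> borel_measurable M"
  by (intro meas_rpow meas_dist)

lemma int_h0: "integrable M (\<lambda>y. rpow (dist x0 y) (p - 1))"
  using mom by (intro integrableI_bounded meas_phi0) (simp add: rpow_nonneg)

lemma int_hS:
  assumes S: "0 \<le> S"
  shows "integrable M (\<lambda>y. rpow (dist x0 y + S) (p - 1))"
proof (rule Bochner_Integration.integrable_bound)
  show "integrable M (\<lambda>y. rpow 2 (p - 1) * (rpow (dist x0 y) (p - 1) + rpow S (p - 1)))"
    using int_h0 by (intro integrable_mult_right Bochner_Integration.integrable_add integrable_const)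
  show "(\<lambda>y. rpow (dist x0 y + S) (p - 1)) \<in> borel_measurable M" by (rule meas_phi)
  show "AE y in M. norm (rpow (dist x0 y + S) (p - 1)) \<le> norm (rpow 2 (p - 1) * (rpow (dist x0 y) (p - 1) + rpow S (p - 1)))"
  proof (rule AE_I2)
    fix y
    let ?d = "dist x0 y"
    have "rpow (?d + S) (p - 1) \<le> rpow (2 * max ?d S) (p - 1)"
      using S p1 by (intro rpow_mono) auto
    also have "\<dots> = rpow 2 (p - 1) * rpow (max ?d S) (p - 1)"
      using S by (intro rpow_mult) auto
    also have "rpow (max ?d S) (p - 1) \<le> rpow ?d (p - 1) + rpow S (p - 1)"
      by (cases "?d \<le> S") (auto simp: max_def rpow_nonneg add_increasing add_increasing2)
    then have "rpow 2 (p - 1) * rpow (max ?d S) (p - 1) \<le> rpow 2 (p - 1) * (rpow ?d (p - 1) + rpow S (p - 1))"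
      by (intro mult_left_mono rpow_nonneg)
    finally show "norm (rpow (?d + S) (p - 1)) \<le> norm (rpow 2 (p - 1) * (rpow ?d (p - 1) + rpow S (p - 1)))"
      by (simp add: rpow_nonneg)
  qed
qed

lemma phi_diff_bound:
  "\<bar>rpow (dist a y) p - rpow (dist b y) p\<bar> \<le> p * dist a b * rpow (dist x0 y + (dist x0 a + dist x0 b)) (p - 1)"
proof -
  let ?S = "dist x0 a + dist x0 b"
  have H: "rpow (dist u y) (p - 1) \<le> rpow (dist x0 y + ?S) (p - 1)" if "u = a \<or> u = b" for u
  proof -
    have "dist u y \<le> dist x0 y + ?S"
      using that dist_triangle3[of a y x0] dist_triangle3[of b y x0] zero_le_dist[of x0 a] zero_le_dist[of x0 b]
      by (smt (verit))
    then show ?thesis using p1 by (intro rpow_mono) auto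
  qed
  have 1: "rpow (dist a y) p - rpow (dist b y) p \<le> p * dist a b * rpow (dist x0 y + ?S) (p - 1)"
  proof -
    have "rpow (dist a y) p - rpow (dist b y) p \<le> p * max 0 (dist a y - dist b y) * rpow (dist a y) (p - 1)"
      using p1 by (intro mvt_pow) auto
    also have "\<dots> \<le> p * dist a b * rpow (dist x0 y + ?S) (p - 1)"
      using p1 H[of a] dist_triangle[of a y b] by (intro mult_mono rpow_nonneg) (auto simp: dist_commute)
    finally show ?thesis .
  qed
  have 2: "rpow (dist b y) p - rpow (dist a y) p \<le> p * dist a b * rpow (dist x0 y + ?S) (p - 1)"
  proof -
    have "rpow (dist b y) p - rpow (dist a y) p \<le> p * max 0 (dist b y - dist a y) * rpow (dist b y) (p - 1)"
      using p1 by (intro mvt_pow) auto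
    also have "\<dots> \<le> p * dist a b * rpow (dist x0 y + ?S) (p - 1)"
      using p1 H[of b] dist_triangle[of b y a] by (intro mult_mono rpow_nonneg) (auto simp: dist_commute)
    finally show ?thesis .
  qed
  show ?thesis using 1 2 by linarith
qed

lemma int_diff: "integrable M (\<lambda>y. rpow (dist a y) p - rpow (dist b y) p)"
proof (rule Bochner_Integration.integrable_bound)
  show "integrable M (\<lambda>y. p * dist a b * rpow (dist x0 y + (dist x0 a + dist x0 b)) (p - 1))"
    by (intro integrable_mult_right int_hS) auto
  show "(\<lambda>y. rpow (dist a y) p - rpow (dist b y) p) \<in> borel_measurable M"
    by (intro borel_measurable_diff meas_phi0)
  show "AE y in M. norm (rpow (dist a y) p - rpow (dist b y) p) \<le> norm (p * dist a b * rpow (dist x0 y + (dist x0 a + dist x0 b)) (p - 1))"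
    using phi_diff_bound p1 by (intro AE_I2) (simp add: rpow_nonneg)
qed

definition F :: "'a \<Rightarrow> real" where
  "F x = (\<integral>y. rpow (dist x y) p - rpow (dist x0 y) p \<partial>M)"

lemma int_eq: "(\<integral>y. rpow (dist a y) p - rpow (dist b y) p \<partial>M) = F a - F b"
proof -
  have "(\<integral>y. rpow (dist a y) p - rpow (dist b y) p \<partial>M)
     = (\<integral>y. (rpow (dist a y) p - rpow (dist x0 y) p) - (rpow (dist b y) p - rpow (dist x0 y) p) \<partial>M)"
    by simp
  also have "\<dots> = F a - F b" unfolding F_def by (intro Bochner_Integration.integral_diff int_diff)
  finally show ?thesis .
qed

lemma Wp_eq: "Wp p M a b = F a - F b"
  unfolding Wp_def by (rule int_eq)

lemma F_x0: "F x0 = 0" unfolding F_def by simp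

lemma Mp_eq: "Mp p M = {x. \<forall>x'. F x \<le> F x'}"
  unfolding Mp_def Wp_eq by auto

end

context wcsetup begin

lemma liminf_lower:
  assumes W: "ereal (dist x y) \<le> liminf (\<lambda>n. ereal (dist (s n) y))" and G: "0 \<le> G"
  shows "ennreal G \<le> liminf (\<lambda>n. ennreal (rpow (dist (s n) y) p - rpow (dist x y) p + G))"
  unfolding le_Liminf_iff
proof (intro allI impI)
  fix z assume z: "z < ennreal G"
  obtain t where t: "z = ennreal t" "0 \<le> t"
    using z by (cases z rule: ennreal_cases) auto
  have tG: "t < G" using z t ennreal_less_iff by auto
  define e where "e = G - t"
  define hy where "hy = rpow (dist x y) (p - 1)"
  define e' where "e' = e / (p * (hy + 1))"
  have e: "0 < e" using tG e_def by simp
  have hy: "0 \<le> hy" unfolding hy_def by (rule rpow_nonneg)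
  have e'pos: "0 < e'" unfolding e'_def using e hy p1 by (intro divide_pos_pos mult_pos_pos) auto
  have allev: "\<forall>c < ereal (dist x y). eventually (\<lambda>n. c < ereal (dist (s n) y)) sequentially"
    using W unfolding le_Liminf_iff by blast
  have lt: "ereal (dist x y - e') < ereal (dist x y)" using e'pos by simp
  have ev: "eventually (\<lambda>n. ereal (dist x y - e') < ereal (dist (s n) y)) sequentially"
    using allev lt by blast
  show "eventually (\<lambda>n. z < ennreal (rpow (dist (s n) y) p - rpow (dist x y) p + G)) sequentially"
    using ev
  proof (rule eventually_mono)
    fix n assume "ereal (dist x y - e') < ereal (dist (s n) y)"
    then have dn: "dist x y - e' < dist (s n) y" by simp
    have "rpow (dist x y) p - rpow (dist (s n) y) p \<le> p * max 0 (dist x y - dist (s n) y) * hy"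
      unfolding hy_def using p1 by (intro mvt_pow) auto
    also have "\<dots> \<le> p * e' * hy"
      using dn e'pos p1 hy by (intro mult_right_mono mult_left_mono) auto
    also have "p * e' * hy < p * e' * (hy + 1)" using p1 e'pos by simp
    also have "p * e' * (hy + 1) = e"
    proof -
      have "p * (hy + 1) \<noteq> 0" using p1 hy by auto
      then show ?thesis unfolding e'_def by simp
    qed
    finally have "t < rpow (dist (s n) y) p - rpow (dist x y) p + G"
      unfolding e_def by simp
    then show "z < ennreal (rpow (dist (s n) y) p - rpow (dist x y) p + G)"
      unfolding t(1) using t(2) by (intro ennreal_lessI) auto
  qed
qed

lemma liminf_strict:
  assumes W: "ereal (dist x y) < liminf (\<lambda>n. ereal (dist (s n) y))" and G: "0 \<le> G"
  shows "ennreal G < liminf (\<lambda>n. ennreal (rpow (dist (s n) y) p - rpow (dist x y) p + G))"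
proof -
  obtain c where c: "ereal (dist x y) < c" "c < liminf (\<lambda>n. ereal (dist (s n) y))"
    using W dense by blast
  obtain c' where c': "c = ereal c'" using c by (cases c) auto
  have "\<forall>d < liminf (\<lambda>n. ereal (dist (s n) y)). eventually (\<lambda>n. d < ereal (dist (s n) y)) sequentially"
    using order_refl[of "liminf (\<lambda>n. ereal (dist (s n) y))"] unfolding le_Liminf_iff by blast
  then have ev: "eventually (\<lambda>n. ereal c' < ereal (dist (s n) y)) sequentially"
    using c c' by blast
  have xc: "dist x y < c'" using c c' by simp
  define \<eta> where "\<eta> = rpow c' p - rpow (dist x y) p"
  have eta: "0 < \<eta>" unfolding \<eta>_def using xc p1 by (simp add: rpow_strict)
  have "ennreal (\<eta> + G) \<le> liminf (\<lambda>n. ennreal (rpow (dist (s n) y) p - rpow (dist x y) p + G))"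
  proof (rule Liminf_bounded)
    show "eventually (\<lambda>n. ennreal (\<eta> + G) \<le> ennreal (rpow (dist (s n) y) p - rpow (dist x y) p + G)) sequentially"
      using ev
    proof (rule eventually_mono)
      fix n assume "ereal c' < ereal (dist (s n) y)"
      then have "c' < dist (s n) y" by simp
      moreover have "0 \<le> c'" using xc zero_le_dist[of x y] by linarith
      ultimately have "rpow c' p \<le> rpow (dist (s n) y) p"
        using p1 by (intro rpow_mono) auto
      then show "ennreal (\<eta> + G) \<le> ennreal (rpow (dist (s n) y) p - rpow (dist x y) p + G)"
        unfolding \<eta>_def by (intro ennreal_leI) auto
    qed
  qed
  moreover have "ennreal G < ennreal (\<eta> + G)" using eta G by (intro ennreal_lessI) auto
  ultimately show ?thesis by order
qed

end

context wcsetup begin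

lemma coercive: "\<exists>R. \<forall>x. F x \<le> 0 \<longrightarrow> dist x x0 \<le> R"
proof (rule ccontr)
  assume "\<not> ?thesis"
  then have "\<forall>n::nat. \<exists>x. F x \<le> 0 \<and> real n + 1 < dist x x0"
    by (metis not_le)
  then obtain s where s: "\<And>n. F (s n) \<le> 0" "\<And>n. real n + 1 < dist (s n) x0"
    by metis
  define D where "D n = dist (s n) x0" for n
  have D1: "real n + 1 < D n" for n using s(2) unfolding D_def by simp
  have phiD: "D n \<le> rpow (D n) p" for n
  proof -
    have "D n powr 1 \<le> D n powr p" using D1[of n] p1 by (intro powr_mono) auto
    then show ?thesis using D1[of n] p1 by (simp add: rpow_def)
  qed
  have phiDpos: "0 < rpow (D n) p" for n using phiD[of n] D1[of n] by linarith
  define f where "f n y = (rpow (dist (s n) y) p - rpow (dist x0 y) p) / rpow (D n) p" for n y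
  define g where "g y = p * rpow (dist x0 y) (p - 1) + 1" for y
  have intf: "integrable M (f n)" for n
    unfolding f_def by (intro integrable_divide_zero int_diff)
  have intg: "integrable M g"
    unfolding g_def by (intro Bochner_Integration.integrable_add integrable_mult_right int_h0 integrable_const)
  have intf_le: "integral\<^sup>L M (f n) \<le> 0" for n
  proof -
    have "integral\<^sup>L M (f n) = F (s n) / rpow (D n) p"
      unfolding f_def F_def by (rule integral_divide_zero)
    then show ?thesis using s(1)[of n] phiDpos[of n] by (simp add: divide_nonpos_pos)
  qed
  have lowb: "0 \<le> f n y + g y" for n y
  proof -
    let ?h0 = "rpow (dist x0 y) (p - 1)"
    have h0: "0 \<le> ?h0" by (rule rpow_nonneg)
    have "rpow (dist x0 y) p - rpow (dist (s n) y) p \<le> p * max 0 (dist x0 y - dist (s n) y) * ?h0"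
      using p1 by (intro mvt_pow) auto
    also have "\<dots> \<le> p * D n * ?h0"
      using p1 h0 dist_triangle[of x0 y "s n"] D1[of n] unfolding D_def
      by (intro mult_right_mono mult_left_mono) (auto simp: dist_commute)
    also have "\<dots> \<le> p * ?h0 * rpow (D n) p"
    proof -
      have "D n * ?h0 \<le> rpow (D n) p * ?h0" by (rule mult_right_mono[OF phiD h0])
      then have "p * (D n * ?h0) \<le> p * (rpow (D n) p * ?h0)" using p1 by (intro mult_left_mono) auto
      then show ?thesis by (simp add: mult_ac)
    qed
    finally have "-(p * ?h0) \<le> f n y"
      unfolding f_def using phiDpos[of n] by (simp add: le_divide_eq)
    then show ?thesis unfolding g_def by simp
  qed
  define \<kappa> where "\<kappa> = rpow (1/2) p - rpow (1/4) p"
  have kpos: "0 < \<kappa>" unfolding \<kappa>_def using p1 by (simp add: rpow_strict)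
  have pw: "ennreal (\<kappa> + g y) \<le> liminf (\<lambda>n. ennreal (f n y + g y))" for y
  proof (rule Liminf_bounded)
    show "eventually (\<lambda>n. ennreal (\<kappa> + g y) \<le> ennreal (f n y + g y)) sequentially"
    proof (rule eventually_sequentiallyI)
      fix n assume n: "nat \<lceil>4 * dist x0 y\<rceil> \<le> n"
      have "4 * dist x0 y \<le> real n"
        using n by linarith
      then have A: "4 * dist x0 y \<le> D n" using D1[of n] by linarith
      have "D n \<le> dist (s n) y + dist x0 y"
        using dist_triangle[of "s n" x0 y] unfolding D_def by (simp add: dist_commute)
      moreover have Dpos: "0 \<le> D n" unfolding D_def by simp
      ultimately have B: "1/2 * D n \<le> dist (s n) y" using A by linarith
      have "rpow (1/2) p * rpow (D n) p = rpow (1/2 * D n) p"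
        by (rule rpow_mult[symmetric]) (use Dpos in auto)
      also have "\<dots> \<le> rpow (dist (s n) y) p"
        using B Dpos p1 by (intro rpow_mono) auto
      finally have C1: "rpow (1/2) p * rpow (D n) p \<le> rpow (dist (s n) y) p" .
      have "rpow (dist x0 y) p \<le> rpow (1/4 * D n) p"
        using A p1 by (intro rpow_mono) auto
      also have "\<dots> = rpow (1/4) p * rpow (D n) p"
        by (rule rpow_mult) (use Dpos in auto)
      finally have C2: "rpow (dist x0 y) p \<le> rpow (1/4) p * rpow (D n) p" .
      have "\<kappa> * rpow (D n) p \<le> rpow (dist (s n) y) p - rpow (dist x0 y) p"
        using C1 C2 unfolding \<kappa>_def by (simp add: left_diff_distrib)
      then have "\<kappa> \<le> f n y"
        unfolding f_def using phiDpos[of n] by (simp add: le_divide_eq)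
      then show "ennreal (\<kappa> + g y) \<le> ennreal (f n y + g y)"
        by (intro ennreal_leI) simp
    qed
  qed
  have "(\<integral>\<^sup>+ y. ennreal (\<kappa> + g y) \<partial>M) \<le> (\<integral>\<^sup>+ y. liminf (\<lambda>n. ennreal (f n y + g y)) \<partial>M)"
    by (intro nn_integral_mono pw)
  also have "\<dots> \<le> liminf (\<lambda>n. ennreal (integral\<^sup>L M (f n) + integral\<^sup>L M g))"
    using intf intg lowb by (intro fatou_real)
  also have "\<dots> \<le> ennreal (integral\<^sup>L M g)"
    using intf_le by (intro Liminf_le always_eventually allI ennreal_leI) auto
  finally have le: "(\<integral>\<^sup>+ y. ennreal (\<kappa> + g y) \<partial>M) \<le> ennreal (integral\<^sup>L M g)" .
  have gpos: "0 \<le> g y" for y unfolding g_def using p1 rpow_nonneg[of "dist x0 y" "p - 1"] by simp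
  have "(\<integral>\<^sup>+ y. ennreal (\<kappa> + g y) \<partial>M) = ennreal (\<integral>y. \<kappa> + g y \<partial>M)"
    using intg kpos gpos by (intro nn_integral_eq_integral) (auto intro!: Bochner_Integration.integrable_add)
  also have "(\<integral>y. \<kappa> + g y \<partial>M) = \<kappa> + integral\<^sup>L M g"
    using intg by (simp add: prob_space)
  finally have "ennreal (\<kappa> + integral\<^sup>L M g) \<le> ennreal (integral\<^sup>L M g)" using le by simp
  moreover have "0 \<le> integral\<^sup>L M g" using gpos by (intro Bochner_Integration.integral_nonneg) auto
  ultimately show False using kpos by (simp add: ennreal_le_iff)
qed

end

context wcsetup begin

lemma W2: "w s x \<Longrightarrow> ereal (dist x y) \<le> liminf (\<lambda>n. ereal (dist (s n) y))"
  using wc unfolding is_weak_convergence_def by blast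

lemma seq_setup:
  fixes x :: 'a and s :: "nat \<Rightarrow> 'a"
  assumes bd: "\<And>n. dist (s n) x0 \<le> S"
  defines "T \<equiv> S + dist x0 x"
  defines "g \<equiv> (\<lambda>y. p * T * rpow (dist x0 y + T) (p - 1) + 1)"
  shows "integrable M g" "\<And>y. 1 \<le> g y"
    "\<And>n y. 0 \<le> (rpow (dist (s n) y) p - rpow (dist x y) p) + g y"
proof -
  have S: "0 \<le> S" using bd[of 0] zero_le_dist[of "s 0" x0] by linarith
  then have T: "0 \<le> T" unfolding T_def by simp
  show "integrable M g" unfolding g_def
    using T by (intro Bochner_Integration.integrable_add integrable_mult_right int_hS integrable_const)
  show g1: "1 \<le> g y" for y unfolding g_def using T p1 rpow_nonneg[of "dist x0 y + T" "p - 1"] by simp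
  fix n y
  let ?hx = "rpow (dist x y) (p - 1)"
  have dsx: "dist (s n) x \<le> T" unfolding T_def using bd[of n] dist_triangle[of "s n" x x0] by (simp add: dist_commute)
  have hx: "?hx \<le> rpow (dist x0 y + T) (p - 1)"
  proof -
    have "dist x y \<le> dist x0 y + T" unfolding T_def using S dist_triangle[of x y x0] by (simp add: dist_commute)
    then show ?thesis using p1 by (intro rpow_mono) auto
  qed
  have "rpow (dist x y) p - rpow (dist (s n) y) p \<le> p * max 0 (dist x y - dist (s n) y) * ?hx"
    using p1 by (intro mvt_pow) auto
  also have "\<dots> \<le> p * T * rpow (dist x0 y + T) (p - 1)"
  proof (rule mult_mono)
    show "p * max 0 (dist x y - dist (s n) y) \<le> p * T"
      using p1 T dsx dist_triangle[of x y "s n"] by (intro mult_left_mono) (auto simp: dist_commute)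
  qed (use hx p1 T in \<open>auto simp: rpow_nonneg\<close>)
  finally show "0 \<le> (rpow (dist (s n) y) p - rpow (dist x y) p) + g y"
    unfolding g_def by simp
qed

lemma lsc:
  assumes ws: "w s x" and bd: "\<And>n. dist (s n) x0 \<le> S"
    and le: "\<And>n. F (s n) \<le> m + 1 / (real n + 1)"
  shows "F x \<le> m"
proof (rule ccontr)
  assume "\<not> F x \<le> m"
  define \<delta> where "\<delta> = F x - m"
  have d: "0 < \<delta>" using \<open>\<not> F x \<le> m\<close> \<delta>_def by simp
  define g where "g y = p * (S + dist x0 x) * rpow (dist x0 y + (S + dist x0 x)) (p - 1) + 1" for y
  note gs = seq_setup[where x = x and s = s and S = S, OF bd, folded g_def]
  define f where "f n y = rpow (dist (s n) y) p - rpow (dist x y) p" for n y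
  have intf: "integrable M (f n)" for n unfolding f_def by (rule int_diff)
  have intf_eq: "integral\<^sup>L M (f n) = F (s n) - F x" for n unfolding f_def by (rule int_eq)
  have g1: "1 \<le> integral\<^sup>L M g"
  proof -
    have "integral\<^sup>L M (\<lambda>y. 1) \<le> integral\<^sup>L M g"
      using gs by (intro integral_mono) auto
    then show ?thesis by (simp add: prob_space)
  qed
  have "ennreal (integral\<^sup>L M g) = (\<integral>\<^sup>+ y. ennreal (g y) \<partial>M)"
    using gs by (intro nn_integral_eq_integral[symmetric]) (auto intro: order_trans[OF zero_le_one])
  also have "\<dots> \<le> (\<integral>\<^sup>+ y. liminf (\<lambda>n. ennreal (f n y + g y)) \<partial>M)"
  proof (intro nn_integral_mono)
    fix y
    show "ennreal (g y) \<le> liminf (\<lambda>n. ennreal (f n y + g y))"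
      unfolding f_def using liminf_lower[OF W2[OF ws], of "g y"] gs(2)[of y] by simp
  qed
  also have "\<dots> \<le> liminf (\<lambda>n. ennreal (integral\<^sup>L M (f n) + integral\<^sup>L M g))"
    using intf gs unfolding f_def by (intro fatou_real) auto
  also have "\<dots> \<le> ennreal (integral\<^sup>L M g - \<delta> / 2)"
  proof (intro Liminf_le)
    show "eventually (\<lambda>n. ennreal (integral\<^sup>L M (f n) + integral\<^sup>L M g) \<le> ennreal (integral\<^sup>L M g - \<delta> / 2)) sequentially"
    proof (rule eventually_sequentiallyI)
      fix n assume n: "nat \<lceil>2 / \<delta>\<rceil> \<le> n"
      then have "2 / \<delta> \<le> real n" by linarith
      then have "2 < \<delta> * (real n + 1)" using d by (simp add: field_simps)
      then have "1 / (real n + 1) < \<delta> / 2" using d by (simp add: field_simps)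
      then have "integral\<^sup>L M (f n) \<le> - (\<delta> / 2)"
        using intf_eq[of n] le[of n] \<delta>_def by linarith
      then show "ennreal (integral\<^sup>L M (f n) + integral\<^sup>L M g) \<le> ennreal (integral\<^sup>L M g - \<delta> / 2)"
        by (intro ennreal_leI) linarith
    qed
  qed simp
  finally have "ennreal (integral\<^sup>L M g) \<le> ennreal (integral\<^sup>L M g - \<delta> / 2)" .
  moreover have "ennreal (integral\<^sup>L M g - \<delta> / 2) < ennreal (integral\<^sup>L M g)"
    using g1 d by (intro ennreal_lessI) auto
  ultimately show False by simp
qed

lemma compact_point:
  assumes ws: "w s x" and bd: "\<And>n. dist (s n) x0 \<le> S" and eqF: "\<And>n. F (s n) = F x"
  shows "\<exists>y. liminf (\<lambda>n. ereal (dist (s n) y)) \<le> ereal (dist x y)"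
proof (rule ccontr)
  assume "\<not> ?thesis"
  then have strict: "ereal (dist x y) < liminf (\<lambda>n. ereal (dist (s n) y))" for y
    using not_le by blast
  define g where "g y = p * (S + dist x0 x) * rpow (dist x0 y + (S + dist x0 x)) (p - 1) + 1" for y
  note gs = seq_setup[where x = x and s = s and S = S, OF bd, folded g_def]
  define f where "f n y = rpow (dist (s n) y) p - rpow (dist x y) p" for n y
  have intf: "integrable M (f n)" for n unfolding f_def by (rule int_diff)
  have intf_eq: "integral\<^sup>L M (f n) = 0" for n unfolding f_def int_eq eqF by simp
  have gnn: "0 \<le> g y" for y using gs(2)[of y] by simp
  define L where "L y = liminf (\<lambda>n. ennreal (f n y + g y))" for y
  have "(\<lambda>y. ennreal (f n y + g y)) \<in> borel_measurable M" for n
    using intf gs by (intro measurable_compose[OF _ measurable_ennreal] borel_measurable_add borel_measurable_integrable) auto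
  then have Lmeas: "L \<in> borel_measurable M" unfolding L_def by (rule borel_measurable_liminf)
  have gmeas: "(\<lambda>y. ennreal (g y)) \<in> borel_measurable M"
    using gs by (intro measurable_compose[OF _ measurable_ennreal] borel_measurable_integrable) auto
  have pos: "ennreal (g y) < L y" for y
    unfolding L_def f_def using liminf_strict[OF strict gnn] by simp
  have gint: "(\<integral>\<^sup>+ y. ennreal (g y) \<partial>M) = ennreal (integral\<^sup>L M g)"
    using gs gnn by (intro nn_integral_eq_integral) auto
  have "(\<integral>\<^sup>+ y. L y \<partial>M) \<le> liminf (\<lambda>n. ennreal (integral\<^sup>L M (f n) + integral\<^sup>L M g))"
    unfolding L_def using intf gs unfolding f_def by (intro fatou_real) auto
  also have "\<dots> = ennreal (integral\<^sup>L M g)" by (simp add: intf_eq Liminf_const)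
  finally have le: "(\<integral>\<^sup>+ y. L y \<partial>M) \<le> (\<integral>\<^sup>+ y. ennreal (g y) \<partial>M)" using gint by simp
  have fin: "(\<integral>\<^sup>+ y. ennreal (g y) \<partial>M) \<noteq> \<infinity>" using gint by simp
  have "(\<integral>\<^sup>+ y. L y - ennreal (g y) \<partial>M) = (\<integral>\<^sup>+ y. L y \<partial>M) - (\<integral>\<^sup>+ y. ennreal (g y) \<partial>M)"
    using Lmeas gmeas fin pos by (intro nn_integral_diff) (auto intro: less_imp_le)
  also have "\<dots> = 0"
    using le fin by (intro diff_eq_0_ennreal) (auto simp: top_unique less_top order.strict_trans1)
  finally have "AE y in M. L y - ennreal (g y) = 0"
    using Lmeas gmeas by (subst nn_integral_0_iff_AE[symmetric]) (auto intro: borel_measurable_minus_ennreal)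
  moreover have "\<And>y. L y - ennreal (g y) \<noteq> 0" using pos diff_gr0_ennreal by (metis less_irrefl)
  ultimately have "AE y in M. False" by simp
  then show False by simp
qed

end

context wcsetup begin

lemma W1: "(\<And>n. dist (s n) x0 \<le> R) \<Longrightarrow> \<exists>(r::nat \<Rightarrow> nat) x. strict_mono r \<and> w (s \<circ> r) x"
  using wc unfolding is_weak_convergence_def
  by (metis (no_types, lifting) bdd_aboveI2)

lemma W3: "w s x \<Longrightarrow> (\<lambda>n. dist (s n) y) \<longlonglongrightarrow> dist x y \<Longrightarrow> (\<lambda>n. dist (s n) x) \<longlonglongrightarrow> 0"
  using wc unfolding is_weak_convergence_def by blast

lemma Wsub: "w s x \<Longrightarrow> strict_mono (r::nat \<Rightarrow> nat) \<Longrightarrow> w (s \<circ> r) x"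
proof -
  have H: "\<forall>s x (r::nat\<Rightarrow>nat). w s x \<and> strict_mono r \<longrightarrow> w (s \<circ> r) x"
    using wc unfolding is_weak_convergence_def is_convergence_def by (elim conjE) assumption
  assume "w s x" "strict_mono r"
  then show ?thesis using H by blast
qed
lemma main: "Mp p M \<noteq> {} \<and> compact (Mp p M)"
proof -
  obtain R where R: "\<And>x. F x \<le> 0 \<Longrightarrow> dist x x0 \<le> R" using coercive by blast
  have ne: "\<exists>x. \<forall>x'. F x \<le> F x'"
  proof (cases "\<forall>x. 0 \<le> F x")
    case True
    then show ?thesis using F_x0 by metis
  next
    case False
    then obtain x1 where x1: "F x1 < 0" by (auto simp: not_le)
    have R0: "0 \<le> R" using R[of x1] x1 zero_le_dist[of x1 x0] by linarith
    define C where "C = p * R * integral\<^sup>L M (\<lambda>y. rpow (dist x0 y) (p - 1))"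
    have lowF: "- C \<le> F x" if "F x \<le> 0" for x
    proof -
      have dx: "dist x x0 \<le> R" using R that by blast
      have "integral\<^sup>L M (\<lambda>y. - (p * R * rpow (dist x0 y) (p - 1))) \<le> F x"
        unfolding F_def
      proof (rule integral_mono)
        show "integrable M (\<lambda>y. - (p * R * rpow (dist x0 y) (p - 1)))"
          by (intro integrable_minus integrable_mult_right int_h0)
        show "integrable M (\<lambda>y. rpow (dist x y) p - rpow (dist x0 y) p)" by (rule int_diff)
        fix y
        have "rpow (dist x0 y) p - rpow (dist x y) p \<le> p * max 0 (dist x0 y - dist x y) * rpow (dist x0 y) (p - 1)"
          using p1 by (intro mvt_pow) auto
        also have "\<dots> \<le> p * R * rpow (dist x0 y) (p - 1)"
          using p1 R0 dx dist_triangle[of x0 y x]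
          by (intro mult_right_mono mult_left_mono rpow_nonneg) (auto simp: dist_commute)
        finally show "- (p * R * rpow (dist x0 y) (p - 1)) \<le> rpow (dist x y) p - rpow (dist x0 y) p"
          by simp
      qed
      then show ?thesis unfolding C_def by simp
    qed
    have C0: "0 \<le> C" unfolding C_def using p1 R0
      by (intro mult_nonneg_nonneg Bochner_Integration.integral_nonneg) (auto simp: rpow_nonneg)
    have bdd: "bdd_below (range F)"
    proof (rule bdd_belowI2)
      fix x show "- C \<le> F x" using lowF[of x] C0 by (cases "F x \<le> 0") auto
    qed
    define m where "m = Inf (range F)"
    have mle: "m \<le> F x" for x unfolding m_def using bdd by (intro cInf_lower) auto
    have mneg: "m < 0" using mle[of x1] x1 by simp
    have "\<exists>x. F x < min 0 (m + 1 / (real n + 1))" for n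
    proof -
      have "Inf (range F) < min 0 (m + 1 / (real n + 1))" using mneg unfolding m_def[symmetric] by simp
      then show ?thesis using cInf_lessD[of "range F"] by blast
    qed
    then obtain s where s: "\<And>n. F (s n) < min 0 (m + 1 / (real n + 1))" by metis
    have sb: "dist (s n) x0 \<le> R" for n using R[of "s n"] s[of n] by simp
    obtain r x where r: "strict_mono r" and wx: "w (s \<circ> r) x" using W1[where s = s, OF sb] by blast
    have "F x \<le> m"
    proof (rule lsc[OF wx])
      show "dist ((s \<circ> r) n) x0 \<le> R" for n using sb by simp
      show "F ((s \<circ> r) n) \<le> m + 1 / (real n + 1)" for n
      proof -
        have "n \<le> r n" using seq_suble[OF r] by simp
        then have "1 / (real (r n) + 1) \<le> 1 / (real n + 1)" by (intro divide_left_mono) auto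
        then show ?thesis using s[of "r n"] by simp
      qed
    qed
    then show ?thesis using mle by (metis order_trans)
  qed
  have cpt: "compact {x. \<forall>x'. F x \<le> F x'}"
    unfolding compact_eq_seq_compact_metric seq_compact_def
  proof (intro allI impI)
    fix s :: "nat \<Rightarrow> 'a" assume sK: "\<forall>n. s n \<in> {x. \<forall>x'. F x \<le> F x'}"
    define m where "m = F (s 0)"
    have Fs: "F (s n) = m" for n
    proof -
      have "F (s n) \<le> F (s 0)" "F (s 0) \<le> F (s n)" using sK by blast+
      then show ?thesis unfolding m_def by simp
    qed
    have sb: "dist (s n) x0 \<le> R" for n
    proof -
      have "F (s n) \<le> F x0" using sK by blast
      then show ?thesis using R[of "s n"] F_x0 by simp
    qed
    obtain r1 x where r1: "strict_mono r1" and wx: "w (s \<circ> r1) x" using W1[where s = s, OF sb] by blast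
    have "F x \<le> m"
    proof (rule lsc[OF wx, where S = R])
      show "dist ((s \<circ> r1) n) x0 \<le> R" for n using sb by simp
      show "F ((s \<circ> r1) n) \<le> m + 1 / (real n + 1)" for n
      proof -
        have "0 \<le> 1 / (real n + 1)" by simp
        then show ?thesis using Fs[of "r1 n"] by simp
      qed
    qed
    have s0: "F (s 0) \<le> F x'" for x' using sK by blast
    have xK: "x \<in> {x. \<forall>x'. F x \<le> F x'}"
    proof (intro CollectI allI)
      fix x' show "F x \<le> F x'" using \<open>F x \<le> m\<close> s0[of x'] unfolding m_def by linarith
    qed
    have Fx: "F x = m" using \<open>F x \<le> m\<close> s0[of x] unfolding m_def by linarith
    obtain y where y: "liminf (\<lambda>n. ereal (dist ((s \<circ> r1) n) y)) \<le> ereal (dist x y)"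
    proof -
      have "\<exists>y. liminf (\<lambda>n. ereal (dist ((s \<circ> r1) n) y)) \<le> ereal (dist x y)"
      proof (rule compact_point[OF wx, where S = R])
        show "dist ((s \<circ> r1) n) x0 \<le> R" for n using sb by simp
        show "F ((s \<circ> r1) n) = F x" for n using Fs Fx by simp
      qed
      then show ?thesis using that by blast
    qed
    have liq: "liminf (\<lambda>n. ereal (dist ((s \<circ> r1) n) y)) = ereal (dist x y)"
      using y W2[OF wx, of y] by simp
    obtain r2 where r2: "strict_mono r2"
      and lim: "((\<lambda>n. ereal (dist ((s \<circ> r1) n) y)) \<circ> r2) \<longlonglongrightarrow> liminf (\<lambda>n. ereal (dist ((s \<circ> r1) n) y))"
      using liminf_subseq_lim by blast
    have lim2: "(\<lambda>n. dist ((s \<circ> r1 \<circ> r2) n) y) \<longlonglongrightarrow> dist x y"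
      using lim unfolding liq by (simp add: o_def lim_ereal)
    have w2: "w (s \<circ> r1 \<circ> r2) x" using Wsub[OF wx r2] .
    have "(\<lambda>n. dist ((s \<circ> r1 \<circ> r2) n) x) \<longlonglongrightarrow> 0" by (rule W3[OF w2 lim2])
    then have "(s \<circ> r1 \<circ> r2) \<longlonglongrightarrow> x" by (subst tendsto_dist_iff) simp
    then have "(s \<circ> (r1 \<circ> r2)) \<longlonglongrightarrow> x" by (simp add: o_assoc)
    moreover have "strict_mono (r1 \<circ> r2)" using r1 r2 by (rule strict_mono_o)
    ultimately show "\<exists>l\<in>{x. \<forall>x'. F x \<le> F x'}. \<exists>r. strict_mono r \<and> (s \<circ> r) \<longlonglongrightarrow> l"
      using xK by blast
  qed
  show ?thesis unfolding Mp_eq using ne cpt by auto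
qed

end

theorem corollary3p10:
  fixes p :: real and \<mu> :: "'a::metric_space measure"
  assumes "separable_metric TYPE('a)"
    and "admits_weak_convergence TYPE('a)"
    and "p \<ge> 1"
    and "\<mu> \<in> P_moment (p - 1)"
  shows "Mp p \<mu> \<noteq> {} \<and> compact (Mp p \<mu>)"
proof -
  obtain w :: "(nat \<Rightarrow> 'a) \<Rightarrow> 'a \<Rightarrow> bool" where w: "is_weak_convergence w"
    using assms(2) unfolding admits_weak_convergence_def by blast
  obtain x0 where prob: "prob_space \<mu>" and sets: "sets \<mu> = sets borel"
    and mom: "(\<integral>\<^sup>+ y. ennreal (rpow (dist x0 y) (p - 1)) \<partial>\<mu>) < \<infinity>"
    using assms(4) unfolding P_moment_def by blast
  interpret wcsetup \<mu> p w x0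
    using prob sets mom w assms(3) by (simp add: wcsetup_def wcsetup_axioms_def)
  show ?thesis by (rule main)
qed

end
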